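(* Let $d$ be a (possibly extended) $K$-quasi-metric on $X$ and let $o\in X$ be a point other than the point at infinity $\infty$ of $d$. Let $d_o$ be the involution of $d$ at $o$. Then $\dim_N(X,d)=\dim_N(X,d_o)$.
   Context: A $K$-quasi-metric ($K\ge1$) is a symmetric map $d:X\times X\to[0,\infty)$ with $d(x,y)=0\iff x=y$ and $d(x,y)\le K\max(d(x,z),d(z,y))$; an extended one has exactly one point $\infty\in X$ with $d(x,\infty)=\infty$ for $x\ne\infty$, all other distances finite. The involution at $o\ne\infty$: $d_o(x,x)=0$, $d_o(x,y)=\frac{d(x,y)}{d(x,o)d(o,y)}$ for distinct $x,y\ne\infty$, $d_o(\infty,y)=1/d(o,y)$, $d_o(x,\infty)=1/d(x,o)$ for distinct points, with $\lambda/0=\infty$ for $\lambda>0$ (so $o$ is the point at infinity of $d_o$). Nagata dimension of a (possibly extended) quasi-metric space $(X,\rho)$ with point at infinity $\infty$ (if any): diameters taken w.r.t. $\rho$. A cover $\mathcal B$ of $X\setminus\{\infty\}$ is $C$-bounded if each $B\in\mathcal B$ has $\mathrm{diam}(B)\le C$. A family $\mathcal B$ has $s$-multiplicity $\le m$ if every $U\subset X$ with $\mathrm{diam}(U)\le s$ meets at most $m$ members of $\mathcal B$. $\dim_N(X,\rho)$ is the infimum of all $n$ for which there is $c>0$ such that for every $s>0$ there is a $cs$-bounded cover of $X\setminus\{\infty\}$ with $s$-multiplicity $\le n+1$. *)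

theory Defs
  imports "HOL-Analysis.Analysis"
begin

text \<open>The optional point at infinity is \<open>pinf\<close>:
  None = ordinary (all distances finite); Some p = extended with point at infinity p.\<close>

definition quasi_metric :: "'a set \<Rightarrow> real \<Rightarrow> ('a \<Rightarrow> 'a \<Rightarrow> ennreal) \<Rightarrow> 'a option \<Rightarrow> bool" where
  "quasi_metric X K d pinf \<longleftrightarrow>
     K \<ge> 1 \<and>
     (\<forall>x\<in>X. \<forall>y\<in>X. d x y = d y x) \<and>
     (\<forall>x\<in>X. \<forall>y\<in>X. d x y = 0 \<longleftrightarrow> x = y) \<and>
     (\<forall>x\<in>X. \<forall>y\<in>X. \<forall>z\<in>X. d x y \<le> ennreal K * max (d x z) (d z y)) \<and>
     (case pinf of
        None \<Rightarrow> (\<forall>x\<in>X. \<forall>y\<in>X. d x y < top)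
      | Some p \<Rightarrow> p \<in> X \<and> (\<forall>x\<in>X. x \<noteq> p \<longrightarrow> d x p = top) \<and>
                  (\<forall>x\<in>X. \<forall>y\<in>X. x \<noteq> p \<longrightarrow> y \<noteq> p \<longrightarrow> d x y < top) \<and>
                  (\<forall>q\<in>X. (\<forall>x\<in>X. x \<noteq> q \<longrightarrow> d x q = top) \<longrightarrow> q = p))"

text \<open>Involution of d at p0 (ennreal division: \<open>\<lambda>/0 = top\<close> for \<open>\<lambda> > 0\<close>).\<close>

definition involution :: "('a \<Rightarrow> 'a \<Rightarrow> ennreal) \<Rightarrow> 'a option \<Rightarrow> 'a \<Rightarrow> 'a \<Rightarrow> 'a \<Rightarrow> ennreal" where
  "involution d pinf p0 x y =
     (if x = y then 0
      else if Some x \<noteq> pinf \<and> Some y \<noteq> pinf then d x y / (d x p0 * d p0 y)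
      else if Some x = pinf then 1 / d p0 y
      else 1 / d x p0)"

definition qdiam :: "('a \<Rightarrow> 'a \<Rightarrow> ennreal) \<Rightarrow> 'a set \<Rightarrow> ennreal" where
  "qdiam \<rho> B = (SUP x\<in>B. SUP y\<in>B. \<rho> x y)"

definition mult_le :: "'a set \<Rightarrow> ('a \<Rightarrow> 'a \<Rightarrow> ennreal) \<Rightarrow> real \<Rightarrow> 'a set set \<Rightarrow> nat \<Rightarrow> bool" where
  "mult_le X \<rho> s \<B> m \<longleftrightarrow>
     (\<forall>U. U \<subseteq> X \<longrightarrow> qdiam \<rho> U \<le> ennreal s \<longrightarrow>
        finite {B\<in>\<B>. B \<inter> U \<noteq> {}} \<and> card {B\<in>\<B>. B \<inter> U \<noteq> {}} \<le> m)"

definition nagata_dim :: "'a set \<Rightarrow> ('a \<Rightarrow> 'a \<Rightarrow> ennreal) \<Rightarrow> 'a option \<Rightarrow> enat" where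
  "nagata_dim X \<rho> pinf = Inf {enat n | n. \<exists>c>0. \<forall>s>0. \<exists>\<B>.
      \<Union>\<B> = X - set_option pinf \<and>
      (\<forall>B\<in>\<B>. qdiam \<rho> B \<le> ennreal (c * s)) \<and>
      mult_le X \<rho> s \<B> (n + 1)}"

end

theory Submission
  imports Defs
begin


lemma qdiam_le_iff: "qdiam \<rho> B \<le> r \<longleftrightarrow> (\<forall>x\<in>B. \<forall>y\<in>B. \<rho> x y \<le> r)"
  unfolding qdiam_def by (simp add: SUP_le_iff)

lemma fin_card_sub_image:
  assumes "S \<subseteq> f ` T" "finite T" "card T \<le> m"
  shows "finite S \<and> card S \<le> m"
proof -
  have "finite (f ` T)" using assms(2) by simp
  hence "finite S" using assms(1) finite_subset by blast
  moreover have "card S \<le> card (f ` T)" using assms(1) \<open>finite (f ` T)\<close> card_mono by blast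
  moreover have "card (f ` T) \<le> card T" by (rule card_image_le[OF assms(2)])
  ultimately show ?thesis using assms(3) by linarith
qed

lemma le_mult_K: "1 \<le> (K::real) \<Longrightarrow> 0 \<le> t \<Longrightarrow> t \<le> K*t"
  using mult_right_mono[of 1 K t] by simp

lemma enn_chain:
  assumes "(u::ennreal) \<le> ennreal K * max v w" "v \<le> ennreal r" "w \<le> ennreal r" "0 \<le> K" "0 \<le> r"
  shows "u \<le> ennreal (K*r)"
proof -
  have "max v w \<le> ennreal r" using assms by simp
  hence "ennreal K * max v w \<le> ennreal K * ennreal r" by (rule mult_left_mono) simp
  thus ?thesis using assms ennreal_mult by (metis order_trans)
qed

lemma union_lemma:
  fixes \<rho> :: "'a \<Rightarrow> 'a \<Rightarrow> ennreal"
  assumes K: "K \<ge> 1"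
    and qt: "\<forall>x\<in>X. \<forall>y\<in>X. \<forall>z\<in>X. \<rho> x y \<le> ennreal K * max (\<rho> x z) (\<rho> z y)"
    and sym: "\<forall>x\<in>X. \<forall>y\<in>X. \<rho> x y = \<rho> y x" and refl: "\<forall>x\<in>X. \<rho> x x = 0"
    and s: "s > 0" and a: "a \<ge> 0" and b: "b \<ge> 0"
    and AX: "\<Union>\<A> \<subseteq> X" and BX: "\<Union>\<B> \<subseteq> X"
    and Ad: "\<forall>A'\<in>\<A>. qdiam \<rho> A' \<le> ennreal (a* s)" and Am: "mult_le X \<rho> s \<A> m"
    and Bd: "\<forall>B'\<in>\<B>. qdiam \<rho> B' \<le> ennreal (b*(K^3*(a+1)* s))"
    and Bm: "mult_le X \<rho> (K^3*(a+1)* s) \<B> m"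
  shows "\<exists>\<C>. \<Union>\<C> = \<Union>\<A> \<union> \<Union>\<B> \<and>
     (\<forall>C\<in>\<C>. qdiam \<rho> C \<le> ennreal ((K^2*(b*(K^3*(a+1)) + K*(a+1)))* s)) \<and> mult_le X \<rho> s \<C> m"
proof -
  define B where "B = \<Union>\<B>"
  define near where "near A' \<longleftrightarrow> (\<exists>x\<in>A'. \<exists>y\<in>B. \<rho> x y \<le> ennreal s)" for A'
  define \<beta> where "\<beta> A' = (SOME B'. B' \<in> \<B> \<and> (\<exists>x\<in>A'. \<exists>y\<in>B'. \<rho> x y \<le> ennreal s))" for A'
  have \<beta>: "\<beta> A' \<in> \<B> \<and> (\<exists>x\<in>A'. \<exists>y\<in>\<beta> A'. \<rho> x y \<le> ennreal s)" if "near A'" for A'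
    unfolding \<beta>_def by (rule someI_ex) (use that in \<open>auto simp: near_def B_def\<close>)
  define G where "G B' = B' \<union> \<Union>{A'\<in>\<A>. near A' \<and> \<beta> A' = B'}" for B'
  define \<C> where "\<C> = G ` \<B> \<union> {A'\<in>\<A>. \<not> near A'}"
  have Ks: "0 \<le> K*(a+1)* s" using K a s by simp
  have cov: "\<Union>\<C> = \<Union>\<A> \<union> \<Union>\<B>"
  proof
    show "\<Union>\<C> \<subseteq> \<Union>\<A> \<union> \<Union>\<B>" unfolding \<C>_def G_def by auto
    show "\<Union>\<A> \<union> \<Union>\<B> \<subseteq> \<Union>\<C>"
    proof
      fix x assume "x \<in> \<Union>\<A> \<union> \<Union>\<B>"
      then show "x \<in> \<Union>\<C>"
      proof
        assume "x \<in> \<Union>\<A>"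
        then obtain A' where A': "A' \<in> \<A>" "x \<in> A'" by blast
        show ?thesis
        proof (cases "near A'")
          case True
          hence "x \<in> G (\<beta> A')" using A' unfolding G_def by blast
          thus ?thesis using \<beta>[OF True] unfolding \<C>_def by blast
        next
          case False thus ?thesis using A' unfolding \<C>_def by blast
        qed
      next
        assume "x \<in> \<Union>\<B>" thus ?thesis unfolding \<C>_def G_def by blast
      qed
    qed
  qed
  have anchor: "\<exists>bx\<in>B'. \<rho> x bx \<le> ennreal (K*(a+1)* s)" if B': "B' \<in> \<B>" and x: "x \<in> G B'" for B' x
  proof (cases "x \<in> B'")
    case True
    hence "x \<in> X" using B' BX by blast
    thus ?thesis using True refl by (intro bexI[of _ x]) auto
  next
    case False
    then obtain A' where A': "A' \<in> \<A>" "near A'" "\<beta> A' = B'" "x \<in> A'" using x unfolding G_def by blast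
    then obtain x0 y0 where xy: "x0 \<in> A'" "y0 \<in> B'" "\<rho> x0 y0 \<le> ennreal s" using \<beta>[OF A'(2)] by blast
    have X: "x \<in> X" "x0 \<in> X" "y0 \<in> X" using A' xy AX BX B' by blast+
    have "\<rho> x x0 \<le> ennreal (a* s)" using Ad A' xy by (auto simp: qdiam_le_iff)
    moreover have "a* s \<le> (a+1)* s" "s \<le> (a+1)* s" using a s by (auto simp: algebra_simps)
    ultimately have xy0: "\<rho> x x0 \<le> ennreal ((a+1)* s)" "\<rho> x0 y0 \<le> ennreal ((a+1)* s)"
      using xy(3) by (meson ennreal_leI order_trans)+
    have "\<rho> x y0 \<le> ennreal (K*((a+1)* s))"
      by (rule enn_chain[of _ K "\<rho> x x0" "\<rho> x0 y0"]) (use qt X K a s xy0 in auto)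
    thus ?thesis using xy(2) by (auto simp: mult.assoc)
  qed

  define L where "L = K^3*(a+1)"
  have L0: "L \<ge> 1"
  proof -
    have "1 \<le> K^3" using K by (simp add: one_le_power)
    moreover have "1 \<le> a + 1" using a by simp
    ultimately show ?thesis unfolding L_def using mult_mono[of 1 "K^3" 1 "a+1"] K by force
  qed
  define D where "D = (K^2*(b*(K^3*(a+1)) + K*(a+1)))* s"
  have diamG: "qdiam \<rho> (G B') \<le> ennreal D" if B': "B' \<in> \<B>" for B'
    unfolding qdiam_le_iff
  proof (intro ballI)
    fix x y assume x: "x \<in> G B'" and y: "y \<in> G B'"
    obtain bx where bx: "bx \<in> B'" "\<rho> x bx \<le> ennreal (K*(a+1)* s)" using anchor[OF B' x] by blast
    obtain by' where by': "by' \<in> B'" "\<rho> y by' \<le> ennreal (K*(a+1)* s)" using anchor[OF B' y] by blast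
    have GX: "G B' \<subseteq> X" using B' AX BX unfolding G_def by blast
    have X: "x \<in> X" "y \<in> X" "bx \<in> X" "by' \<in> X" using x y bx by' GX B' BX by blast+
    define r1 where "r1 = b*L* s + K*(a+1)* s"
    have r1: "b*L* s \<le> r1" "K*(a+1)* s \<le> r1" "0 \<le> r1" "0 \<le> b*L* s" using b L0 s Ks unfolding r1_def by auto
    have "\<rho> bx by' \<le> ennreal (b*L* s)" using Bd B' bx by' by (auto simp: qdiam_le_iff L_def mult.assoc)
    hence 1: "\<rho> bx by' \<le> ennreal r1" using r1 by (meson ennreal_leI order_trans)
    have 2: "\<rho> by' y \<le> ennreal r1" using by' sym X r1 by (metis ennreal_leI order_trans)
    have 3: "\<rho> bx y \<le> ennreal (K*r1)" by (rule enn_chain[of _ K "\<rho> bx by'" "\<rho> by' y"]) (use qt X 1 2 K r1 in auto)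
    have "r1 \<le> K*r1" using K r1 by (simp add: mult_le_cancel_right1)
    hence 4: "\<rho> x bx \<le> ennreal (K*r1)" using bx r1 by (meson ennreal_leI order_trans)
    have "\<rho> x y \<le> ennreal (K*(K*r1))" by (rule enn_chain[of _ K "\<rho> x bx" "\<rho> bx y"]) (use qt X 3 4 K r1 in auto)
    moreover have "K*(K*r1) = D" unfolding D_def r1_def L_def by (simp add: algebra_simps power2_eq_square power3_eq_cube)
    ultimately show "\<rho> x y \<le> ennreal D" by simp
  qed
  have aD: "a * s \<le> D"
  proof -
    have "a+1 \<le> K*(a+1)" by (rule le_mult_K) (use K a in auto)
    hence "a \<le> K*(a+1)" by linarith
    also have "\<dots> \<le> b*(K^3*(a+1)) + K*(a+1)" using b K a by simp
    also have "\<dots> \<le> K^2*(b*(K^3*(a+1)) + K*(a+1))" 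
      by (rule le_mult_K) (use K a b in \<open>auto simp: one_le_power\<close>)
    finally show ?thesis unfolding D_def using s by (simp add: mult_right_mono)
  qed
  have diam: "\<forall>C\<in>\<C>. qdiam \<rho> C \<le> ennreal D"
  proof
    fix C assume "C \<in> \<C>"
    then consider "C \<in> G ` \<B>" | "C \<in> \<A>" unfolding \<C>_def by blast
    thus "qdiam \<rho> C \<le> ennreal D"
    proof cases
      case 1 thus ?thesis using diamG by blast
    next
      case 2 thus ?thesis using Ad aD by (meson ennreal_leI order_trans)
    qed
  qed
  have mult: "mult_le X \<rho> s \<C> m"
    unfolding mult_le_def
  proof (intro allI impI)
    fix U assume UX: "U \<subseteq> X" and Ud: "qdiam \<rho> U \<le> ennreal s"
    have Ud': "\<rho> u v \<le> ennreal s" if "u \<in> U" "v \<in> U" for u v using Ud that by (auto simp: qdiam_le_iff)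
    show "finite {C \<in> \<C>. C \<inter> U \<noteq> {}} \<and> card {C \<in> \<C>. C \<inter> U \<noteq> {}} \<le> m"
    proof (cases "U \<inter> B = {}")
      case True
      define h where "h A' = (if near A' then G (\<beta> A') else A')" for A'
      have "{C \<in> \<C>. C \<inter> U \<noteq> {}} \<subseteq> h ` {A' \<in> \<A>. A' \<inter> U \<noteq> {}}"
      proof
        fix C assume C: "C \<in> {C \<in> \<C>. C \<inter> U \<noteq> {}}"
        then consider B' where "B' \<in> \<B>" "C = G B'" | "C \<in> \<A>" "\<not> near C" unfolding \<C>_def by blast
        thus "C \<in> h ` {A' \<in> \<A>. A' \<inter> U \<noteq> {}}"
        proof cases
          case 1
          have "B' \<inter> U = {}" using True 1 unfolding B_def by blast
          then obtain A' where "A' \<in> \<A>" "near A'" "\<beta> A' = B'" "A' \<inter> U \<noteq> {}"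
            using C 1 unfolding G_def by blast
          thus ?thesis using 1 unfolding h_def by (intro image_eqI[of _ _ A']) auto
        next
          case 2 thus ?thesis using C unfolding h_def by (intro image_eqI[of _ _ C]) auto
        qed
      qed
      moreover have "finite {A' \<in> \<A>. A' \<inter> U \<noteq> {}} \<and> card {A' \<in> \<A>. A' \<inter> U \<noteq> {}} \<le> m"
        using Am UX Ud unfolding mult_le_def by blast
      ultimately show ?thesis using fin_card_sub_image by blast
    next
      case False
      then obtain b0 where b0: "b0 \<in> U" "b0 \<in> B" by blast
      define W where "W = {w \<in> B. \<exists>u\<in>U. \<rho> u w \<le> ennreal (K*(a+1)* s)}"
      have WX: "W \<subseteq> X" using BX unfolding W_def B_def by blast
      have Wd: "qdiam \<rho> W \<le> ennreal (K^3*(a+1)* s)"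
        unfolding qdiam_le_iff
      proof (intro ballI)
        fix w1 w2 assume w1: "w1 \<in> W" and w2: "w2 \<in> W"
        then obtain u1 u2 where u: "u1 \<in> U" "u2 \<in> U" "\<rho> u1 w1 \<le> ennreal (K*(a+1)* s)"
          "\<rho> u2 w2 \<le> ennreal (K*(a+1)* s)" unfolding W_def by blast
        have X: "w1 \<in> X" "w2 \<in> X" "u1 \<in> X" "u2 \<in> X" using w1 w2 WX u UX by blast+
        have "s \<le> K*(a+1)* s" using K a s by (smt (verit) mult_right_mono mult_le_cancel_right1 mult_nonneg_nonneg)
        hence 1: "\<rho> u1 u2 \<le> ennreal (K*(a+1)* s)" using Ud' u by (meson ennreal_leI order_trans)
        have 2: "\<rho> u1 w2 \<le> ennreal (K*(K*(a+1)* s))" by (rule enn_chain[of _ K "\<rho> u1 u2" "\<rho> u2 w2"]) (use qt X 1 u K Ks in auto)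
        have "K*(a+1)* s \<le> K*(K*(a+1)* s)" using K Ks by (simp add: mult_le_cancel_right1)
        hence 3: "\<rho> w1 u1 \<le> ennreal (K*(K*(a+1)* s))" using u sym X by (metis ennreal_leI order_trans)
        have "\<rho> w1 w2 \<le> ennreal (K*(K*(K*(a+1)* s)))" by (rule enn_chain[of _ K "\<rho> w1 u1" "\<rho> u1 w2"]) (use qt X 2 3 K Ks in auto)
        moreover have "K*(K*(K*(a+1)* s)) = K^3*(a+1)* s" by (simp add: power3_eq_cube algebra_simps)
        ultimately show "\<rho> w1 w2 \<le> ennreal (K^3*(a+1)* s)" by simp
      qed
      have "{C \<in> \<C>. C \<inter> U \<noteq> {}} \<subseteq> G ` {B' \<in> \<B>. B' \<inter> W \<noteq> {}}"
      proof
        fix C assume C: "C \<in> {C \<in> \<C>. C \<inter> U \<noteq> {}}"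
        then obtain u where u: "u \<in> C" "u \<in> U" by blast
        have "\<not> (C \<in> \<A> \<and> \<not> near C)"
        proof
          assume "C \<in> \<A> \<and> \<not> near C"
          moreover have "\<rho> u b0 \<le> ennreal s" using Ud' u b0 by blast
          ultimately show False using u b0 unfolding near_def by blast
        qed
        then obtain B' where B': "B' \<in> \<B>" "C = G B'" using C unfolding \<C>_def by blast
        obtain bx where bx: "bx \<in> B'" "\<rho> u bx \<le> ennreal (K*(a+1)* s)" using anchor[OF B'(1)] u B'(2) by blast
        have "bx \<in> W" unfolding W_def B_def using bx B' u by blast
        thus "C \<in> G ` {B' \<in> \<B>. B' \<inter> W \<noteq> {}}" using B' bx by blast
      qed
      moreover have "finite {B' \<in> \<B>. B' \<inter> W \<noteq> {}} \<and> card {B' \<in> \<B>. B' \<inter> W \<noteq> {}} \<le> m"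
        using Bm WX Wd unfolding mult_le_def by blast
      ultimately show ?thesis using fin_card_sub_image by blast
    qed
  qed
  show ?thesis using cov diam mult unfolding D_def by blast
qed




lemma floor_log_bounds:
  fixes M r :: real
  assumes "1 < M" "0 < r"
  shows "M powr (real_of_int \<lfloor>log M r\<rfloor>) \<le> r" "r < M powr (real_of_int \<lfloor>log M r\<rfloor> + 1)"
proof -
  have r: "M powr (log M r) = r" using assms by simp
  have "real_of_int \<lfloor>log M r\<rfloor> \<le> log M r" by simp
  hence "M powr (real_of_int \<lfloor>log M r\<rfloor>) \<le> M powr (log M r)" using assms by (intro powr_mono) auto
  thus "M powr (real_of_int \<lfloor>log M r\<rfloor>) \<le> r" using r by simp
  have "log M r < real_of_int \<lfloor>log M r\<rfloor> + 1" by linarith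
  hence "M powr (log M r) < M powr (real_of_int \<lfloor>log M r\<rfloor> + 1)" using assms by (intro powr_less_mono) auto
  thus "r < M powr (real_of_int \<lfloor>log M r\<rfloor> + 1)" using r by simp
qed

lemma parity_cover:
  fixes \<rho> \<sigma> :: "'a \<Rightarrow> 'a \<Rightarrow> ennreal" and g :: "'a \<Rightarrow> ennreal"
  assumes K: "K \<ge> 1" and sp: "s > 0" and R: "R > 0" "R \<le> 1/(K* s)" and c: "c > 0"
    and D: "\<forall>t>0. \<Union>(D t) = Y\<sigma> \<and> (\<forall>B\<in>D t. qdiam \<sigma> B \<le> ennreal (c*t)) \<and> mult_le X \<sigma> t (D t) m"
    and YX: "Y \<subseteq> X" and fin_in: "\<forall>x\<in>Y. 0 < g x \<longrightarrow> g x < top \<longrightarrow> x \<in> Y\<sigma>"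
    and comp: "\<forall>x\<in>Y. \<forall>y\<in>Y. 0 < g x \<longrightarrow> g x < top \<longrightarrow> 0 < g y \<longrightarrow> g y < top \<longrightarrow> \<sigma> x y = \<rho> x y * (g x * g y)"
    and sep: "\<forall>x\<in>Y. \<forall>y\<in>Y. 0 < g x \<longrightarrow> g x < top \<longrightarrow> ennreal K * g x < g y \<longrightarrow> 1 \<le> ennreal K * g x * \<rho> x y"
  shows "\<exists>\<C>. \<Union>\<C> = {x\<in>Y. 0 < g x \<and> g x < ennreal R \<and> \<lfloor>log (2*K) (enn2real (g x))\<rfloor> mod 2 = j} \<and>
      (\<forall>C\<in>\<C>. qdiam \<rho> C \<le> ennreal (c*(2*K)^2* s)) \<and> mult_le X \<rho> s \<C> m"
proof -
  define M where "M = 2*K"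
  have M: "M > 1" "M \<ge> K" "M > 0" using K unfolding M_def by auto
  define gr where "gr x = enn2real (g x)" for x
  define idx where "idx x = \<lfloor>log M (gr x)\<rfloor>" for x
  define Z where "Z = {x\<in>Y. 0 < g x \<and> g x < ennreal R \<and> idx x mod 2 = j}"
  have Zg: "g x = ennreal (gr x)" "0 < gr x" "gr x < R" if "x \<in> Z" for x
  proof -
    have "g x < top" using that unfolding Z_def using top.not_eq_extremum by fastforce
    thus g: "g x = ennreal (gr x)" unfolding gr_def by simp
    thus gp: "0 < gr x" using that unfolding Z_def by (simp add: ennreal_less_zero_iff)
    show "gr x < R" using that g R gp ennreal_less_iff[of "gr x" R] unfolding Z_def by simp
  qed
  have ZY: "Z \<subseteq> Y" unfolding Z_def by blast
  have Zfin: "0 < g x" "g x < top" if "x \<in> Z" for x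
    using Zg[OF that] by auto
  have Zb: "M powr (real_of_int (idx x)) \<le> gr x" "gr x < M powr (real_of_int (idx x) + 1)" if "x \<in> Z" for x
    using floor_log_bounds[OF M(1) Zg(2)[OF that]] unfolding idx_def by auto
  define P where "P k = {x\<in>Z. idx x = k}" for k
  define t where "t k = s * M powr (2 * real_of_int k + 2)" for k :: int
  have tpos: "t k > 0" for k unfolding t_def using sp M by simp
  define \<C> where "\<C> = (\<Union>k. (\<lambda>B. B \<inter> P k) ` D (t k))"
  have cov: "\<Union>\<C> = Z"
  proof
    show "\<Union>\<C> \<subseteq> Z" unfolding \<C>_def P_def by auto
    show "Z \<subseteq> \<Union>\<C>"
    proof
      fix x assume x: "x \<in> Z"
      hence "x \<in> Y\<sigma>" using fin_in Zfin[OF x] unfolding Z_def by blast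
      then obtain B where B: "B \<in> D (t (idx x))" "x \<in> B" using D tpos by blast
      thus "x \<in> \<Union>\<C>" unfolding \<C>_def P_def using x by blast
    qed
  qed

  have gmul: "ennreal (M powr (real_of_int (idx x)) * M powr (real_of_int (idx y))) \<le> g x * g y"
    "g x * g y \<le> ennreal (M powr (real_of_int (idx x) + 1) * M powr (real_of_int (idx y) + 1))"
    if "x \<in> Z" "y \<in> Z" for x y
  proof -
    have gx: "g x * g y = ennreal (gr x * gr y)" using Zg[OF that(1)] Zg[OF that(2)] by (simp add: ennreal_mult)
    show "ennreal (M powr (real_of_int (idx x)) * M powr (real_of_int (idx y))) \<le> g x * g y"
      unfolding gx using Zb[OF that(1)] Zb[OF that(2)] Zg[OF that(1)] Zg[OF that(2)]
      by (intro ennreal_leI mult_mono) auto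
    show "g x * g y \<le> ennreal (M powr (real_of_int (idx x) + 1) * M powr (real_of_int (idx y) + 1))"
      unfolding gx using Zb[OF that(1)] Zb[OF that(2)] Zg[OF that(1)] Zg[OF that(2)]
      by (intro ennreal_leI mult_mono) auto
  qed
  have diam: "\<forall>C\<in>\<C>. qdiam \<rho> C \<le> ennreal (c*M^2* s)"
  proof
    fix C assume "C \<in> \<C>"
    then obtain k B where B: "B \<in> D (t k)" "C = B \<inter> P k" unfolding \<C>_def by blast
    show "qdiam \<rho> C \<le> ennreal (c*M^2* s)" unfolding qdiam_le_iff
    proof (intro ballI)
      fix x y assume x: "x \<in> C" and y: "y \<in> C"
      have xy: "x \<in> Z" "y \<in> Z" "idx x = k" "idx y = k" "x \<in> B" "y \<in> B" using x y B unfolding P_def by auto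
      define e where "e = ennreal (M powr (2 * real_of_int k))"
      have e: "e \<noteq> 0" "e \<noteq> top" unfolding e_def using M by auto
      have "M powr (real_of_int (idx x)) * M powr (real_of_int (idx y)) = M powr (2 * real_of_int k)"
        using xy by (simp add: powr_add[symmetric])
      hence "e \<le> g x * g y" using gmul(1)[OF xy(1,2)] unfolding e_def by simp
      hence "\<rho> x y * e \<le> \<rho> x y * (g x * g y)" by (rule mult_left_mono) simp
      also have "\<dots> = \<sigma> x y" using comp ZY xy(1,2) Zfin[OF xy(1)] Zfin[OF xy(2)] by (metis subsetD)
      also have "\<dots> \<le> ennreal (c * t k)"
      proof -
        have "qdiam \<sigma> B \<le> ennreal (c * t k)" using D tpos[of k] B(1) by blast
        thus ?thesis using xy(5,6) unfolding qdiam_le_iff by blast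
      qed
      also have "c * t k = (c*M^2* s) * M powr (2 * real_of_int k)"
      proof -
        have "M powr (2 * real_of_int k + 2) = M powr (2 * real_of_int k) * M powr 2" by (rule powr_add)
        also have "M powr 2 = M^2" using M by (simp add: powr_numeral)
        finally show ?thesis unfolding t_def by simp
      qed
      also have "ennreal \<dots> = ennreal (c*M^2* s) * e" unfolding e_def using c sp M by (simp add: ennreal_mult)
      finally have "e * \<rho> x y \<le> e * ennreal (c*M^2* s)" by (simp add: mult.commute)
      thus "\<rho> x y \<le> ennreal (c*M^2* s)" using ennreal_mult_le_mult_iff e by blast
    qed
  qed
  have lt_contra: False if u: "u \<in> Z" and v: "v \<in> Z" and uv: "\<rho> u v \<le> ennreal s" and lt: "idx u < idx v" for u v
  proof -
    have "idx u mod 2 = idx v mod 2" using u v unfolding Z_def by simp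
    hence "idx u + 2 \<le> idx v" using lt by presburger
    hence "real_of_int (idx u) + 2 \<le> real_of_int (idx v)" by linarith
    hence 1: "M powr (real_of_int (idx u) + 2) \<le> M powr (real_of_int (idx v))" using M by (intro powr_mono) auto
    have "K * gr u < K * M powr (real_of_int (idx u) + 1)" using Zb[OF u] K by simp
    also have "\<dots> \<le> M * M powr (real_of_int (idx u) + 1)" using M by (intro mult_right_mono) auto
    also have "\<dots> = M powr (real_of_int (idx u) + 2)" using M by (simp add: powr_add power2_eq_square)
    also have "\<dots> \<le> gr v" using 1 Zb[OF v] by linarith
    finally have "K * gr u < gr v" .
    hence "ennreal (K * gr u) < ennreal (gr v)" using Zg[OF u] K by (simp add: ennreal_less_iff)
    hence "ennreal K * g u < g v" using Zg[OF u] Zg[OF v] K by (simp add: ennreal_mult)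
    hence "1 \<le> ennreal K * g u * \<rho> u v" using sep u v Zfin[OF u] unfolding Z_def by blast
    also have "\<dots> \<le> ennreal K * g u * ennreal s" using uv by (rule mult_left_mono) simp
    also have "\<dots> = ennreal (K * gr u * s)" using Zg[OF u] K sp by (simp add: ennreal_mult)
    finally have "ennreal 1 \<le> ennreal (K * gr u * s)" by simp
    hence "1 \<le> K * gr u * s" using ennreal_le_iff[of "K * gr u * s" 1] Zg[OF u] K sp by simp
    moreover have "K * gr u * s < K * R * s" using Zg[OF u] K sp by simp
    moreover have "K * R * s \<le> 1" using R K sp by (simp add: field_simps)
    ultimately show False by linarith
  qed
  have mult: "mult_le X \<rho> s \<C> m"
    unfolding mult_le_def
  proof (intro allI impI)
    fix U assume UX: "U \<subseteq> X" and Ud: "qdiam \<rho> U \<le> ennreal s"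
    have Ud': "\<rho> u v \<le> ennreal s" if "u \<in> U" "v \<in> U" for u v using Ud that by (auto simp: qdiam_le_iff)
    show "finite {C \<in> \<C>. C \<inter> U \<noteq> {}} \<and> card {C \<in> \<C>. C \<inter> U \<noteq> {}} \<le> m"
    proof (cases "U \<inter> Z = {}")
      case True
      hence "{C \<in> \<C>. C \<inter> U \<noteq> {}} = {}" using cov by blast
      thus ?thesis by (simp only: finite.emptyI card.empty) simp
    next
      case False
      then obtain u where u: "u \<in> U" "u \<in> Z" by blast
      define k where "k = idx u"
      have "{C \<in> \<C>. C \<inter> U \<noteq> {}} \<subseteq> (\<lambda>B. B \<inter> P k) ` {B \<in> D (t k). B \<inter> (U \<inter> P k) \<noteq> {}}"
      proof
        fix C assume C: "C \<in> {C \<in> \<C>. C \<inter> U \<noteq> {}}"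
        then obtain k' B where B: "B \<in> D (t k')" "C = B \<inter> P k'" unfolding \<C>_def by blast
        obtain v where v: "v \<in> C" "v \<in> U" using C by blast
        have vZ: "v \<in> Z" "idx v = k'" using v B unfolding P_def by auto
        have "k' = k"
        proof (rule ccontr)
          assume "k' \<noteq> k"
          hence "idx u < idx v \<or> idx v < idx u" using vZ k_def by auto
          thus False using lt_contra u vZ Ud' v by blast
        qed
        thus "C \<in> (\<lambda>B. B \<inter> P k) ` {B \<in> D (t k). B \<inter> (U \<inter> P k) \<noteq> {}}" using B v by blast
      qed
      moreover have "finite {B \<in> D (t k). B \<inter> (U \<inter> P k) \<noteq> {}} \<and> card {B \<in> D (t k). B \<inter> (U \<inter> P k) \<noteq> {}} \<le> m"
      proof -
        have "qdiam \<sigma> (U \<inter> P k) \<le> ennreal (t k)" unfolding qdiam_le_iff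
        proof (intro ballI)
          fix x y assume x: "x \<in> U \<inter> P k" and y: "y \<in> U \<inter> P k"
          have xy: "x \<in> Z" "y \<in> Z" "idx x = k" "idx y = k" using x y unfolding P_def by auto
          have "\<sigma> x y = \<rho> x y * (g x * g y)" using comp ZY xy(1,2) Zfin[OF xy(1)] Zfin[OF xy(2)] by (metis subsetD)
          also have "\<dots> \<le> ennreal s * ennreal (M powr (real_of_int k + 1) * M powr (real_of_int k + 1))"
            using Ud' x y gmul(2)[OF xy(1,2)] xy by (intro mult_mono) auto
          also have "\<dots> = ennreal (t k)"
          proof -
            have "M powr (real_of_int k + 1) * M powr (real_of_int k + 1) = M powr (2 * real_of_int k + 2)"
              by (simp add: powr_add[symmetric])
            thus ?thesis unfolding t_def using sp M by (simp add: ennreal_mult)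
          qed
          finally show "\<sigma> x y \<le> ennreal (t k)" .
        qed
        moreover have "U \<inter> P k \<subseteq> X" using UX by blast
        ultimately show ?thesis using D tpos unfolding mult_le_def by blast
      qed
      ultimately show ?thesis using fin_card_sub_image by blast
    qed
  qed
  show ?thesis using cov diam mult unfolding Z_def idx_def gr_def M_def by blast
qed




definition good :: "'a set \<Rightarrow> ('a \<Rightarrow> 'a \<Rightarrow> ennreal) \<Rightarrow> 'a set \<Rightarrow> nat \<Rightarrow> bool" where
  "good X \<rho> Y n \<longleftrightarrow> (\<exists>c>0. \<forall>s>0. \<exists>\<B>. \<Union>\<B> = Y \<and> (\<forall>B\<in>\<B>. qdiam \<rho> B \<le> ennreal (c * s)) \<and> mult_le X \<rho> s \<B> (n + 1))"

lemma main_lemma: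
  fixes \<rho> \<sigma> :: "'a \<Rightarrow> 'a \<Rightarrow> ennreal" and g :: "'a \<Rightarrow> ennreal"
  assumes K: "K \<ge> 1"
    and qt: "\<forall>x\<in>X. \<forall>y\<in>X. \<forall>z\<in>X. \<rho> x y \<le> ennreal K * max (\<rho> x z) (\<rho> z y)"
    and sym: "\<forall>x\<in>X. \<forall>y\<in>X. \<rho> x y = \<rho> y x" and refl: "\<forall>x\<in>X. \<rho> x x = 0"
    and YX: "Y \<subseteq> X" and gpos: "\<forall>x\<in>Y. 0 < g x" and fin_in: "\<forall>x\<in>Y. g x < top \<longrightarrow> x \<in> Y\<sigma>"
    and comp: "\<forall>x\<in>Y. \<forall>y\<in>Y. g x < top \<longrightarrow> g y < top \<longrightarrow> \<sigma> x y = \<rho> x y * (g x * g y)"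
    and sep: "\<forall>x\<in>Y. \<forall>y\<in>Y. g x < top \<longrightarrow> ennreal K * g x < g y \<longrightarrow> 1 \<le> ennreal K * g x * \<rho> x y"
    and far: "\<forall>R>0. \<forall>x\<in>Y. \<forall>y\<in>Y. ennreal R \<le> g x \<longrightarrow> ennreal R \<le> g y \<longrightarrow> \<rho> x y \<le> ennreal (K/R)"
    and gd: "good X \<sigma> Y\<sigma> n"
  shows "good X \<rho> Y n"
proof -
  obtain c where c: "c > 0" and h: "\<forall>s>0. \<exists>\<B>. \<Union>\<B> = Y\<sigma> \<and> (\<forall>B\<in>\<B>. qdiam \<sigma> B \<le> ennreal (c * s)) \<and> mult_le X \<sigma> s \<B> (n + 1)"
    using gd unfolding good_def by blast
  define D where "D t = (SOME \<B>. \<Union>\<B> = Y\<sigma> \<and> (\<forall>B\<in>\<B>. qdiam \<sigma> B \<le> ennreal (c * t)) \<and> mult_le X \<sigma> t \<B> (n + 1))" for t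
  have D: "\<forall>t>0. \<Union>(D t) = Y\<sigma> \<and> (\<forall>B\<in>D t. qdiam \<sigma> B \<le> ennreal (c*t)) \<and> mult_le X \<sigma> t (D t) (n+1)"
  proof (intro allI impI)
    fix t :: real assume "t > 0"
    hence "\<exists>\<B>. \<Union>\<B> = Y\<sigma> \<and> (\<forall>B\<in>\<B>. qdiam \<sigma> B \<le> ennreal (c * t)) \<and> mult_le X \<sigma> t \<B> (n + 1)" using h by blast
    thus "\<Union>(D t) = Y\<sigma> \<and> (\<forall>B\<in>D t. qdiam \<sigma> B \<le> ennreal (c*t)) \<and> mult_le X \<sigma> t (D t) (n+1)"
      unfolding D_def by (rule someI_ex)
  qed
  define a where "a = c*(2*K)^2"
  define L1 where "L1 = K^3*(a+1)"
  define c1 where "c1 = K^2*(a*(K^3*(a+1)) + K*(a+1))"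
  define L2 where "L2 = K^3*(c1+1)"
  define b2 where "b2 = K^2*L1/L2"
  define c2 where "c2 = K^2*(b2*(K^3*(c1+1)) + K*(c1+1))"
  have a0: "a > 0" unfolding a_def using c K by simp
  have L1: "L1 \<ge> 1"
  proof -
    have "1 \<le> K^3" using K by (simp add: one_le_power)
    moreover have "1 \<le> a + 1" using a0 by simp
    ultimately show ?thesis unfolding L1_def using mult_mono[of 1 "K^3" 1 "a+1"] K by force
  qed
  have c10: "c1 > 0" unfolding c1_def using a0 K by (simp add: add_pos_pos)
  have L20: "L2 > 0" unfolding L2_def using c10 K by simp
  have b20: "b2 > 0" unfolding b2_def using L1 L20 K by simp
  have c20: "c2 > 0" unfolding c2_def using b20 c10 K by (simp add: add_pos_pos)
  have comp': "\<forall>x\<in>Y. \<forall>y\<in>Y. 0 < g x \<longrightarrow> g x < top \<longrightarrow> 0 < g y \<longrightarrow> g y < top \<longrightarrow> \<sigma> x y = \<rho> x y * (g x * g y)"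
    using comp by blast
  have sep': "\<forall>x\<in>Y. \<forall>y\<in>Y. 0 < g x \<longrightarrow> g x < top \<longrightarrow> ennreal K * g x < g y \<longrightarrow> 1 \<le> ennreal K * g x * \<rho> x y"
    using sep by blast
  have fin_in': "\<forall>x\<in>Y. 0 < g x \<longrightarrow> g x < top \<longrightarrow> x \<in> Y\<sigma>" using fin_in by blast
  have "\<forall>s>0. \<exists>\<B>. \<Union>\<B> = Y \<and> (\<forall>B\<in>\<B>. qdiam \<rho> B \<le> ennreal (c2 * s)) \<and> mult_le X \<rho> s \<B> (n + 1)"
  proof (intro allI impI)
    fix s :: real assume s: "s > 0"
    define R where "R = 1/(K*(L1* s))"
    have R0: "R > 0" unfolding R_def using K L1 s by simp
    have R1: "R \<le> 1/(K*(L1* s))" unfolding R_def by simp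
    have R2: "R \<le> 1/(K* s)" unfolding R_def using K L1 s by (simp add: field_simps)
    define Z where "Z j = {x\<in>Y. 0 < g x \<and> g x < ennreal R \<and> \<lfloor>log (2*K) (enn2real (g x))\<rfloor> mod 2 = j}" for j :: int
    have L1s: "L1 * s > 0" using L1 s by simp
    have "\<exists>\<C>. \<Union>\<C> = Z 0 \<and> (\<forall>C\<in>\<C>. qdiam \<rho> C \<le> ennreal (c*(2*K)^2* s)) \<and> mult_le X \<rho> s \<C> (n+1)"
      unfolding Z_def by (fact parity_cover[OF K s R0 R2 c D YX fin_in' comp' sep', where j=0])
    then obtain \<C>E where CE: "\<Union>\<C>E = Z 0" "\<forall>C\<in>\<C>E. qdiam \<rho> C \<le> ennreal (c*(2*K)^2* s)" "mult_le X \<rho> s \<C>E (n+1)"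
      by (elim exE conjE) (rule that)
    have "\<exists>\<C>. \<Union>\<C> = Z 1 \<and> (\<forall>C\<in>\<C>. qdiam \<rho> C \<le> ennreal (c*(2*K)^2*(L1* s))) \<and> mult_le X \<rho> (L1* s) \<C> (n+1)"
      unfolding Z_def by (fact parity_cover[OF K L1s R0 R1 c D YX fin_in' comp' sep', where j=1])
    then obtain \<C>O where CO: "\<Union>\<C>O = Z 1" "\<forall>C\<in>\<C>O. qdiam \<rho> C \<le> ennreal (c*(2*K)^2*(L1* s))" "mult_le X \<rho> (L1* s) \<C>O (n+1)"
      by (elim exE conjE) (rule that)
    have Zsub: "Z j \<subseteq> Y" for j unfolding Z_def by blast
    have K3: "K^3*(a+1)*(s) = L1 * s" unfolding L1_def by simp
    obtain \<C>1 where C1: "\<Union>\<C>1 = Z 0 \<union> Z 1" "\<forall>C\<in>\<C>1. qdiam \<rho> C \<le> ennreal (c1 * s)" "mult_le X \<rho> s \<C>1 (n+1)"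
    proof -
      have "\<exists>\<C>. \<Union>\<C> = \<Union>\<C>E \<union> \<Union>\<C>O \<and>
       (\<forall>C\<in>\<C>. qdiam \<rho> C \<le> ennreal ((K^2*(a*(K^3*(a+1)) + K*(a+1)))* s)) \<and> mult_le X \<rho> s \<C> (n+1)"
      proof (rule union_lemma[OF K qt sym refl s])
        show "0 \<le> a" using a0 by simp
        show "0 \<le> a" using a0 by simp
        show "\<Union>\<C>E \<subseteq> X" "\<Union>\<C>O \<subseteq> X" using CE(1) CO(1) Zsub[of 0] Zsub[of 1] YX by auto
        show "\<forall>A'\<in>\<C>E. qdiam \<rho> A' \<le> ennreal (a * s)" using CE(2) unfolding a_def by simp
        show "mult_le X \<rho> s \<C>E (n+1)" by (rule CE(3))
        show "\<forall>B'\<in>\<C>O. qdiam \<rho> B' \<le> ennreal (a * (K^3*(a+1)* s))" using CO(2) unfolding a_def L1_def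
          by (simp add: mult.assoc)
        show "mult_le X \<rho> (K^3*(a+1)* s) \<C>O (n+1)" using CO(3) unfolding L1_def by (simp add: mult.assoc)
      qed
      thus ?thesis using that CE(1) CO(1) unfolding c1_def by auto
    qed
    define F where "F = {x\<in>Y. ennreal R \<le> g x}"
    have Ydec: "Y = (Z 0 \<union> Z 1) \<union> F"
    proof
      show "(Z 0 \<union> Z 1) \<union> F \<subseteq> Y" using Zsub unfolding F_def by blast
      show "Y \<subseteq> (Z 0 \<union> Z 1) \<union> F"
      proof
        fix x assume x: "x \<in> Y"
        show "x \<in> (Z 0 \<union> Z 1) \<union> F"
        proof (cases "ennreal R \<le> g x")
          case True thus ?thesis using x unfolding F_def by blast
        next
          case False
          hence "g x < ennreal R" by simp
          moreover have "\<lfloor>log (2*K) (enn2real (g x))\<rfloor> mod 2 = 0 \<or> \<lfloor>log (2*K) (enn2real (g x))\<rfloor> mod 2 = 1" by presburger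
          ultimately show ?thesis using x gpos unfolding Z_def by blast
        qed
      qed
    qed
    have "\<exists>\<C>. \<Union>\<C> = \<Union>\<C>1 \<union> \<Union>{F} \<and>
       (\<forall>C\<in>\<C>. qdiam \<rho> C \<le> ennreal ((K^2*(b2*(K^3*(c1+1)) + K*(c1+1)))* s)) \<and> mult_le X \<rho> s \<C> (n+1)"
    proof (rule union_lemma[OF K qt sym refl s])
      show "0 \<le> c1" using c10 by simp
      show "0 \<le> b2" using b20 by simp
      show "\<Union>\<C>1 \<subseteq> X" "\<Union>{F} \<subseteq> X" using C1(1) Zsub YX unfolding F_def by auto
      show "\<forall>A'\<in>\<C>1. qdiam \<rho> A' \<le> ennreal (c1 * s)" by (rule C1(2))
      show "mult_le X \<rho> s \<C>1 (n+1)" by (rule C1(3))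
      show "\<forall>B'\<in>{F}. qdiam \<rho> B' \<le> ennreal (b2 * (K^3*(c1+1)* s))"
      proof -
        have "K / R = b2 * (K^3*(c1+1)* s)" unfolding R_def b2_def L2_def[symmetric] using L20 K
          by (simp add: field_simps power2_eq_square)
        moreover have "qdiam \<rho> F \<le> ennreal (K / R)" unfolding qdiam_le_iff F_def using far R0 by blast
        ultimately show ?thesis by simp
      qed
      show "mult_le X \<rho> (K^3*(c1+1)* s) {F} (n+1)" unfolding mult_le_def
      proof (intro allI impI)
        fix U
        have "{B \<in> {F}. B \<inter> U \<noteq> {}} \<subseteq> {F}" by blast
        moreover have "card {F} \<le> n + 1" by simp
        ultimately show "finite {B \<in> {F}. B \<inter> U \<noteq> {}} \<and> card {B \<in> {F}. B \<inter> U \<noteq> {}} \<le> n + 1"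
          by (meson card_mono finite.emptyI finite_insert finite_subset order_trans)
      qed
    qed
    thus "\<exists>\<B>. \<Union>\<B> = Y \<and> (\<forall>B\<in>\<B>. qdiam \<rho> B \<le> ennreal (c2 * s)) \<and> mult_le X \<rho> s \<B> (n + 1)"
      using C1(1) Ydec unfolding c2_def by auto
  qed
  thus ?thesis unfolding good_def using c20 by blast
qed



lemma prodK: "0 \<le> (x::real) \<Longrightarrow> 0 \<le> y \<Longrightarrow> x \<le> K * p \<Longrightarrow> y \<le> K * q \<Longrightarrow> x * y \<le> K^2 * (p * q)"
proof -
  assume h: "0 \<le> x" "0 \<le> y" "x \<le> K * p" "y \<le> K * q"
  have "x * y \<le> (K * p) * (K * q)" using h by (intro mult_mono) auto
  thus ?thesis by (simp add: power2_eq_square algebra_simps)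
qed

lemma RQ1:
  fixes a b c u v w K :: real
  assumes pos: "0 < a" "0 < b" "0 < c" "0 < u" "0 < v" "0 < w" and K: "1 \<le> K"
    and h1: "u \<le> K  *  max v w" and h2: "c \<le> K  *  max w b" and h3: "c \<le> K  *  max v a" and h4: "u \<le> K  *  max a b"
  shows "u/(a * b) \<le> K^2  *  max (v/(a * c)) (w/(c * b))"
proof -
  have key: "u * c \<le> K^2 * (v * b) \<or> u * c \<le> K^2 * (w * a)"
  proof (cases "w \<le> v")
    case True
    hence u: "u \<le> K * v" using h1 by (simp add: max_def)
    show ?thesis
    proof (cases "c \<le> K * b")
      case True thus ?thesis using prodK[of u c K v b] u pos by auto
    next
      case False
      hence cw: "c \<le> K * w" using h2 by (auto simp: max_def split: if_splits)
      show ?thesis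
      proof (cases "b \<le> a")
        case True
        hence "u \<le> K * a" using h4 by (simp add: max_def)
        thus ?thesis using prodK[of u c K a w] cw pos by (auto simp: mult.commute)
      next
        case False
        hence ub: "u \<le> K * b" using h4 by (simp add: max_def)
        have "K * a \<le> K * b" using False K by simp
        hence "c \<le> K * v" using h3 \<open>\<not> c \<le> K * b\<close> by (auto simp: max_def split: if_splits)
        thus ?thesis using prodK[of u c K b v] ub pos by (auto simp: mult.commute)
      qed
    qed
  next
    case False
    hence u: "u \<le> K * w" using h1 by (simp add: max_def)
    show ?thesis
    proof (cases "c \<le> K * a")
      case True thus ?thesis using prodK[of u c K w a] u pos by auto
    next
      case False
      hence cv: "c \<le> K * v" using h3 by (auto simp: max_def split: if_splits)
      show ?thesis
      proof (cases "a \<le> b")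
        case True
        hence "u \<le> K * b" using h4 by (simp add: max_def)
        thus ?thesis using prodK[of u c K b v] cv pos by (auto simp: mult.commute)
      next
        case False
        hence ua: "u \<le> K * a" using h4 by (simp add: max_def)
        have "K * b \<le> K * a" using False K by simp
        hence "c \<le> K * w" using h2 \<open>\<not> c \<le> K * a\<close> by (auto simp: max_def split: if_splits)
        thus ?thesis using prodK[of u c K a w] ua pos by (auto simp: mult.commute)
      qed
    qed
  qed
  show ?thesis
  proof (cases "u * c \<le> K^2 * (v * b)")
    case True
    hence "u/(a * b) \<le> K^2  *  (v/(a * c))" using pos by (simp add: field_simps)
    thus ?thesis by (smt (verit) K max.cobounded1 mult_left_mono zero_le_power2)
  next
    case False
    hence "u * c \<le> K^2 * (w * a)" using key by blast
    hence "u/(a * b) \<le> K^2  *  (w/(c * b))" using pos by (simp add: field_simps)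
    thus ?thesis by (smt (verit) K max.cobounded2 mult_left_mono zero_le_power2)
  qed
qed

lemma RQ2:
  fixes b c w K :: real
  assumes pos: "0 < b" "0 < c" "0 < w" and K: "1 \<le> K" and h: "c \<le> K  *  max w b"
  shows "1/b \<le> K^2  *  max (1/c) (w/(c * b))"
proof -
  have KK: "K \<le> K^2" using K by (simp add: power2_eq_square)
  show ?thesis
  proof (cases "b \<le> w")
    case True
    hence "c \<le> K^2  *  w" using h KK pos by (smt (verit) max_def mult_right_mono)
    hence "1/b \<le> K^2  *  (w/(c * b))" using pos by (simp add: field_simps)
    thus ?thesis by (smt (verit) K max.cobounded2 mult_left_mono zero_le_power2)
  next
    case False
    hence "c \<le> K^2  *  b" using h KK pos by (smt (verit) max_def mult_right_mono)
    hence "1/b \<le> K^2  *  (1/c)" using pos by (simp add: field_simps)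
    thus ?thesis by (smt (verit) K max.cobounded1 mult_left_mono zero_le_power2)
  qed
qed

lemma RQ4:
  fixes a b u K :: real
  assumes pos: "0 < a" "0 < b" "0 < u" and K: "1 \<le> K" and h: "u \<le> K  *  max a b"
  shows "u/(a * b) \<le> K^2  *  max (1/a) (1/b)"
proof -
  have KK: "K \<le> K^2" using K by (simp add: power2_eq_square)
  show ?thesis
  proof (cases "a \<le> b")
    case True
    hence "u \<le> K^2  *  b" using h KK pos by (smt (verit) max_def mult_right_mono)
    hence "u/(a * b) \<le> K^2  *  (1/a)" using pos by (simp add: field_simps)
    thus ?thesis by (smt (verit) K max.cobounded1 mult_left_mono zero_le_power2)
  next
    case False
    hence "u \<le> K^2  *  a" using h KK pos by (smt (verit) max_def mult_right_mono)
    hence "u/(a * b) \<le> K^2  *  (1/b)" using pos by (simp add: field_simps)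
    thus ?thesis by (smt (verit) K max.cobounded2 mult_left_mono zero_le_power2)
  qed
qed




locale qsetup =
  fixes X :: "'a set" and K :: real and d :: "'a \<Rightarrow> 'a \<Rightarrow> ennreal" and pinf :: "'a option" and p0 :: 'a
  assumes qm: "quasi_metric X K d pinf" and oX: "p0 \<in> X" and onp: "Some p0 \<noteq> pinf"
begin

abbreviation "Xf \<equiv> X - set_option pinf"
definition dr where "dr x y = enn2real (d x y)"
abbreviation "dinv \<equiv> involution d pinf p0"

lemma qmE: "K \<ge> 1 \<and> (\<forall>x\<in>X. \<forall>y\<in>X. d x y = d y x) \<and> (\<forall>x\<in>X. \<forall>y\<in>X. d x y = 0 \<longleftrightarrow> x = y) \<and>
     (\<forall>x\<in>X. \<forall>y\<in>X. \<forall>z\<in>X. d x y \<le> ennreal K * max (d x z) (d z y))"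
  using qm unfolding quasi_metric_def by (elim conjE) (intro conjI)
lemma K1: "K \<ge> 1" using qmE by (elim conjE)
lemma dsym: "x \<in> X \<Longrightarrow> y \<in> X \<Longrightarrow> d x y = d y x" using qmE by (elim conjE) (elim ballE, assumption, auto)
lemma d0: "x \<in> X \<Longrightarrow> y \<in> X \<Longrightarrow> d x y = 0 \<longleftrightarrow> x = y" using qmE by (elim conjE) (elim ballE, assumption, auto)
lemma dqt: "x \<in> X \<Longrightarrow> y \<in> X \<Longrightarrow> z \<in> X \<Longrightarrow> d x y \<le> ennreal K * max (d x z) (d z y)"
  using qmE by (elim conjE) (elim ballE, assumption, auto)
lemma qm_case: "case pinf of None \<Rightarrow> (\<forall>x\<in>X. \<forall>y\<in>X. d x y < top)
      | Some p \<Rightarrow> p \<in> X \<and> (\<forall>x\<in>X. x \<noteq> p \<longrightarrow> d x p = top) \<and>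
                  (\<forall>x\<in>X. \<forall>y\<in>X. x \<noteq> p \<longrightarrow> y \<noteq> p \<longrightarrow> d x y < top) \<and>
                  (\<forall>q\<in>X. (\<forall>x\<in>X. x \<noteq> q \<longrightarrow> d x q = top) \<longrightarrow> q = p)"
  using qm unfolding quasi_metric_def by (elim conjE)
lemma dfin: "x \<in> Xf \<Longrightarrow> y \<in> Xf \<Longrightarrow> d x y < top"
proof (cases pinf)
  case None
  assume "x \<in> Xf" "y \<in> Xf"
  thus ?thesis using qm_case None by simp
next
  case (Some p)
  assume "x \<in> Xf" "y \<in> Xf"
  thus ?thesis using qm_case Some by simp
qed
lemma dinf: "pinf = Some p \<Longrightarrow> x \<in> X \<Longrightarrow> x \<noteq> p \<Longrightarrow> d x p = top \<and> d p x = top \<and> p \<in> X"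
proof -
  assume h: "pinf = Some p" "x \<in> X" "x \<noteq> p"
  hence "p \<in> X" "d x p = top" using qm_case by auto
  thus ?thesis using dsym h by auto
qed
lemma oXf: "p0 \<in> Xf" using oX onp by (cases pinf) auto

lemma dreal: "x \<in> Xf \<Longrightarrow> y \<in> Xf \<Longrightarrow> d x y = ennreal (dr x y)"
  unfolding dr_def using dfin by (simp add: less_top)
lemma dr_nn: "dr x y \<ge> 0" unfolding dr_def by simp
lemma dr_sym: "x \<in> Xf \<Longrightarrow> y \<in> Xf \<Longrightarrow> dr x y = dr y x" unfolding dr_def using dsym by auto
lemma dr_pos: "x \<in> Xf \<Longrightarrow> y \<in> Xf \<Longrightarrow> x \<noteq> y \<Longrightarrow> dr x y > 0"
proof -
  assume h: "x \<in> Xf" "y \<in> Xf" "x \<noteq> y"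
  hence "d x y \<noteq> 0" using d0 by auto
  thus ?thesis using dreal[OF h(1,2)] dr_nn by (metis ennreal_0 less_eq_real_def)
qed
lemma dr_qt: "x \<in> Xf \<Longrightarrow> y \<in> Xf \<Longrightarrow> z \<in> Xf \<Longrightarrow> dr x y \<le> K * max (dr x z) (dr z y)"
proof -
  assume h: "x \<in> Xf" "y \<in> Xf" "z \<in> Xf"
  have "ennreal (dr x y) \<le> ennreal K * max (ennreal (dr x z)) (ennreal (dr z y))"
    using dqt[of x y z] h dreal by auto
  also have "max (ennreal (dr x z)) (ennreal (dr z y)) = ennreal (max (dr x z) (dr z y))"
    by (simp add: max_def ennreal_le_iff dr_nn)
  also have "ennreal K * \<dots> = ennreal (K * max (dr x z) (dr z y))"
    by (rule ennreal_mult[symmetric]) (use K1 dr_nn[of x z] in auto)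
  finally have "ennreal (dr x y) \<le> ennreal (K * max (dr x z) (dr z y))" .
  moreover have "0 \<le> K * max (dr x z) (dr z y)" using K1 dr_nn[of x z] by simp
  ultimately show ?thesis using ennreal_le_iff by blast
qed

lemma I_refl: "dinv x x = 0" unfolding involution_def by simp
lemma I_sym: "x \<in> X \<Longrightarrow> y \<in> X \<Longrightarrow> dinv x y = dinv y x"
  unfolding involution_def using dsym oX by (auto simp: mult.commute)
lemma I_reg: "x \<in> Xf \<Longrightarrow> y \<in> Xf \<Longrightarrow> x \<noteq> p0 \<Longrightarrow> y \<noteq> p0 \<Longrightarrow> x \<noteq> y \<Longrightarrow>
    dinv x y = ennreal (dr x y / (dr x p0 * dr y p0))"
proof -
  assume h: "x \<in> Xf" "y \<in> Xf" "x \<noteq> p0" "y \<noteq> p0" "x \<noteq> y"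
  have "Some x \<noteq> pinf" "Some y \<noteq> pinf" using h by auto
  hence "dinv x y = d x y / (d x p0 * d p0 y)" unfolding involution_def using h by simp
  also have "\<dots> = ennreal (dr x y) / (ennreal (dr x p0) * ennreal (dr y p0))"
    using dreal h oXf dr_sym by auto
  also have "\<dots> = ennreal (dr x y / (dr x p0 * dr y p0))"
    using dr_pos[OF h(1) oXf h(3)] dr_pos[OF h(2) oXf h(4)] dr_nn
    by (simp add: ennreal_mult[symmetric] divide_ennreal)
  finally show ?thesis .
qed
lemma I_p: "pinf = Some p \<Longrightarrow> y \<in> Xf \<Longrightarrow> y \<noteq> p0 \<Longrightarrow>
    dinv p y = ennreal (1 / dr y p0) \<and> dinv y p = ennreal (1 / dr y p0)"
proof -
  assume h: "pinf = Some p" "y \<in> Xf" "y \<noteq> p0"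
  have yp: "y \<noteq> p" using h by auto
  have "d p0 y = ennreal (dr y p0)" "d y p0 = ennreal (dr y p0)" using dreal h oXf dr_sym by auto
  moreover have "dr y p0 > 0" using dr_pos[OF h(2) oXf h(3)] .
  ultimately show ?thesis unfolding involution_def using h yp
    by (auto simp: divide_ennreal[symmetric])
qed
lemma I_o: "x \<in> X \<Longrightarrow> x \<noteq> p0 \<Longrightarrow> dinv p0 x = top \<and> dinv x p0 = top"
proof -
  assume h: "x \<in> X" "x \<noteq> p0"
  have "d p0 p0 = 0" using d0 oX by simp
  moreover have "d x p0 \<noteq> 0" "d p0 x \<noteq> 0" using d0 h oX by auto
  ultimately show ?thesis unfolding involution_def using h onp by auto
qed
lemma cases3: "x \<in> X \<Longrightarrow> x = p0 \<or> pinf = Some x \<or> (x \<in> Xf \<and> x \<noteq> p0)" by (cases pinf) auto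

end

lemma enn_real_ineq: "a \<le> k * max p q \<Longrightarrow> 0 \<le> p \<Longrightarrow> 0 \<le> q \<Longrightarrow> 0 \<le> k \<Longrightarrow>
   ennreal a \<le> ennreal k * max (ennreal p) (ennreal q)"
proof -
  assume h: "a \<le> k * max p q" "0 \<le> p" "0 \<le> q" "0 \<le> k"
  have "max (ennreal p) (ennreal q) = ennreal (max p q)" using h by (simp add: max_def ennreal_le_iff)
  moreover have "ennreal k * ennreal (max p q) = ennreal (k * max p q)" using h by (simp add: ennreal_mult)
  ultimately show ?thesis using h(1) by (simp add: ennreal_leI)
qed

lemma enn3: "0 \<le> a \<Longrightarrow> 0 \<le> b \<Longrightarrow> 0 \<le> c \<Longrightarrow> ennreal a * ennreal b * ennreal c = ennreal (a*b*c)"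
  by (simp add: ennreal_mult)

lemma enn_le_kmax: "(1::ennreal) \<le> k \<Longrightarrow> t \<le> k * max a t" "(1::ennreal) \<le> k \<Longrightarrow> t \<le> k * max t a"
proof -
  assume k: "1 \<le> k"
  have "t \<le> 1 * max a t" by simp
  also have "\<dots> \<le> k * max a t" using k by (rule mult_right_mono) simp
  finally show "t \<le> k * max a t" .
  have "t \<le> 1 * max t a" by simp
  also have "\<dots> \<le> k * max t a" using k by (rule mult_right_mono) simp
  finally show "t \<le> k * max t a" .
qed

context qsetup begin

lemma K2: "K^2 \<ge> 1" using K1 by (simp add: one_le_power)
lemma enK2: "(1::ennreal) \<le> ennreal (K^2)" using K2 by (simp add: ennreal_1[symmetric] del: ennreal_1)

lemma reg_cases: "x \<in> X \<Longrightarrow> x \<noteq> p0 \<Longrightarrow> pinf = Some x \<or> x \<in> Xf" by (cases pinf) auto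

lemma I_qt: "x \<in> X \<Longrightarrow> y \<in> X \<Longrightarrow> z \<in> X \<Longrightarrow> dinv x y \<le> ennreal (K^2) * max (dinv x z) (dinv z y)"
proof -
  assume X: "x \<in> X" "y \<in> X" "z \<in> X"
  have K0: "0 \<le> K^2" by simp
  show ?thesis
  proof (cases "x = y \<or> z = x \<or> z = y")
    case True
    thus ?thesis using enn_le_kmax[OF enK2] I_refl by auto
  next
    case False
    hence dist: "x \<noteq> y" "z \<noteq> x" "z \<noteq> y" by auto
    show ?thesis
    proof (cases "x = p0 \<or> y = p0 \<or> z = p0")
      case True
      hence "dinv x z = top \<or> dinv z y = top" using I_o X dist by metis
      moreover have "ennreal (K^2) \<noteq> 0" using K1 by simp
      moreover have "max (dinv x z) (dinv z y) = top" using calculation(1) by (auto simp: max_def top_unique)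
      ultimately show ?thesis by simp
    next
      case False
      hence np: "x \<noteq> p0" "y \<noteq> p0" "z \<noteq> p0" by auto
      have pos: "dr w p0 > 0" if "w \<in> Xf" "w \<noteq> p0" for w using dr_pos[OF that(1) oXf that(2)] .
      have pos2: "dr w w' > 0" if "w \<in> Xf" "w' \<in> Xf" "w \<noteq> w'" for w w' using dr_pos that .
      consider "pinf = Some x" | "pinf = Some y" | "pinf = Some z" | "x \<in> Xf" "y \<in> Xf" "z \<in> Xf"
        using reg_cases X np by metis
      thus ?thesis
      proof cases
        case 1
        hence r: "y \<in> Xf" "z \<in> Xf" using X dist by auto
        have e: "dinv x y = ennreal (1 / dr y p0)" "dinv x z = ennreal (1 / dr z p0)"
          "dinv z y = ennreal (dr z y / (dr z p0 * dr y p0))"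
          using I_p[OF 1] I_reg r np dist by auto
        have "1 / dr y p0 \<le> K^2 * max (1 / dr z p0) (dr z y / (dr z p0 * dr y p0))"
          by (rule RQ2) (use pos r np pos2 dist K1 dr_qt[OF r(2) oXf r(1)] in auto)
        thus ?thesis unfolding e by (rule enn_real_ineq) (use dr_nn in auto)
      next
        case 2
        hence r: "x \<in> Xf" "z \<in> Xf" using X dist by auto
        have e: "dinv x y = ennreal (1 / dr x p0)" "dinv z y = ennreal (1 / dr z p0)"
          "dinv x z = ennreal (dr x z / (dr x p0 * dr z p0))"
          using I_p[OF 2] I_reg r np dist by auto
        have "1 / dr x p0 \<le> K^2 * max (1 / dr z p0) (dr z x / (dr z p0 * dr x p0))"
          by (rule RQ2) (use pos r np pos2 dist K1 dr_qt[OF r(2) oXf r(1)] in auto)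
        hence "1 / dr x p0 \<le> K^2 * max (dr x z / (dr x p0 * dr z p0)) (1 / dr z p0)"
          using dr_sym r by (simp add: max.commute mult.commute)
        thus ?thesis unfolding e by (rule enn_real_ineq) (use dr_nn in auto)
      next
        case 3
        hence r: "x \<in> Xf" "y \<in> Xf" using X dist by auto
        have e: "dinv x z = ennreal (1 / dr x p0)" "dinv z y = ennreal (1 / dr y p0)"
          "dinv x y = ennreal (dr x y / (dr x p0 * dr y p0))"
          using I_p[OF 3] I_reg r np dist by auto
        have "dr x y / (dr x p0 * dr y p0) \<le> K^2 * max (1 / dr x p0) (1 / dr y p0)"
          by (rule RQ4) (use pos r np pos2 dist K1 dr_qt[OF r(1) r(2) oXf] dr_sym[OF oXf r(2)] in auto)
        thus ?thesis unfolding e by (rule enn_real_ineq) (use dr_nn in auto)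
      next
        case 4
        have e: "dinv x z = ennreal (dr x z / (dr x p0 * dr z p0))" "dinv z y = ennreal (dr z y / (dr z p0 * dr y p0))"
          "dinv x y = ennreal (dr x y / (dr x p0 * dr y p0))"
          using I_reg 4 np dist by auto
        have "dr x y / (dr x p0 * dr y p0) \<le> K^2 * max (dr x z / (dr x p0 * dr z p0)) (dr z y / (dr z p0 * dr y p0))"
          by (rule RQ1) (use pos 4 np pos2 dist K1 dr_qt[OF 4(1) 4(2) 4(3)] dr_qt[OF 4(3) oXf 4(2)]
               dr_qt[OF 4(3) oXf 4(1)] dr_qt[OF 4(1) 4(2) oXf] dr_sym[OF oXf 4(2)] dr_sym[OF 4(3) 4(1)] in auto)
        thus ?thesis unfolding e by (rule enn_real_ineq) (use dr_nn in auto)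
      qed
    qed
  qed
qed

end


context qsetup begin

lemma dir1: "good X d Xf n \<Longrightarrow> good X dinv (X - {p0}) n"
proof -
  assume gd: "good X d Xf n"
  have pos: "dr w p0 > 0" if "w \<in> Xf" "w \<noteq> p0" for w using dr_pos[OF that(1) oXf that(2)] .
  have gfin: "d x p0 = ennreal (dr x p0) \<and> x \<in> Xf" if "x \<in> X - {p0}" "d x p0 < top" for x
  proof -
    have "x \<in> Xf"
    proof (rule ccontr)
      assume "x \<notin> Xf"
      hence "pinf = Some x" using that by (cases pinf) auto
      hence "d p0 x = top" using dinf oX onp by auto
      thus False using that dsym oX by auto
    qed
    thus ?thesis using dreal oXf by auto
  qed
  show ?thesis
  proof (rule main_lemma[OF K2, where \<sigma> = d and g = "\<lambda>x. d x p0" and Y\<sigma> = Xf])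
    show "\<forall>x\<in>X. \<forall>y\<in>X. \<forall>z\<in>X. dinv x y \<le> ennreal (K^2) * max (dinv x z) (dinv z y)" using I_qt by blast
    show "\<forall>x\<in>X. \<forall>y\<in>X. dinv x y = dinv y x" using I_sym by blast
    show "\<forall>x\<in>X. dinv x x = 0" using I_refl by blast
    show "X - {p0} \<subseteq> X" by blast
    show "\<forall>x\<in>X - {p0}. 0 < d x p0" using d0 oX by (auto simp: zero_less_iff_neq_zero)
    show "\<forall>x\<in>X - {p0}. d x p0 < top \<longrightarrow> x \<in> Xf" using gfin by blast
    show "good X d Xf n" by (rule gd)
    show "\<forall>x\<in>X - {p0}. \<forall>y\<in>X - {p0}. d x p0 < top \<longrightarrow> d y p0 < top \<longrightarrow> d x y = dinv x y * (d x p0 * d y p0)"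
    proof (intro ballI impI)
      fix x y assume x: "x \<in> X - {p0}" and y: "y \<in> X - {p0}" and fx: "d x p0 < top" and fy: "d y p0 < top"
      have r: "x \<in> Xf" "y \<in> Xf" "d x p0 = ennreal (dr x p0)" "d y p0 = ennreal (dr y p0)"
        using gfin x y fx fy by auto
      show "d x y = dinv x y * (d x p0 * d y p0)"
      proof (cases "x = y")
        case True thus ?thesis using d0 x I_refl by auto
      next
        case False
        have e1: "d x p0 * d y p0 = ennreal (dr x p0 * dr y p0)" unfolding r(3,4)
          by (rule ennreal_mult[symmetric]) (use dr_nn in auto)
        have "dinv x y * (d x p0 * d y p0) = ennreal (dr x y / (dr x p0 * dr y p0)) * ennreal (dr x p0 * dr y p0)"
          using I_reg[OF r(1,2)] x y False e1 by simp
        also have "\<dots> = ennreal (dr x y / (dr x p0 * dr y p0) * (dr x p0 * dr y p0))"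
          by (rule ennreal_mult[symmetric]) (use dr_nn in auto)
        also have "\<dots> = ennreal (dr x y)"
        proof -
          have "dr x p0 > 0" "dr y p0 > 0" using pos r(1,2) x y by auto
          thus ?thesis by simp
        qed
        finally show ?thesis using dreal r by simp
      qed
    qed
    show "\<forall>x\<in>X - {p0}. \<forall>y\<in>X - {p0}. d x p0 < top \<longrightarrow> ennreal (K^2) * d x p0 < d y p0 \<longrightarrow>
        1 \<le> ennreal (K^2) * d x p0 * dinv x y"
    proof (intro ballI impI)
      fix x y assume x: "x \<in> X - {p0}" and y: "y \<in> X - {p0}" and fx: "d x p0 < top"
        and lt: "ennreal (K^2) * d x p0 < d y p0"
      have r: "x \<in> Xf" "d x p0 = ennreal (dr x p0)" using gfin x fx by auto
      have a: "dr x p0 > 0" using pos r x by auto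
      have xy: "x \<noteq> y"
      proof
        assume "x = y"
        hence "ennreal (K^2) * ennreal (dr x p0) < 1 * ennreal (dr x p0)" using lt r by simp
        moreover have "1 * ennreal (dr x p0) \<le> ennreal (K^2) * ennreal (dr x p0)" using enK2 by (rule mult_right_mono) simp
        ultimately show False by simp
      qed
      show "1 \<le> ennreal (K^2) * d x p0 * dinv x y"
      proof (cases "pinf = Some y")
        case True
        hence "dinv x y = ennreal (1 / dr x p0)" using I_p[OF True r(1)] x by auto
        hence "ennreal (K^2) * d x p0 * dinv x y = ennreal (K^2) * ennreal (dr x p0) * ennreal (1 / dr x p0)"
          using r by simp
        also have "\<dots> = ennreal (K^2 * dr x p0 * (1 / dr x p0))" by (rule enn3) (use a in auto)
        also have "\<dots> = ennreal (K^2)" using a by simp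
        finally show ?thesis using enK2 by simp
      next
        case False
        hence ry: "y \<in> Xf" using y by (cases pinf) auto
        have b: "dr y p0 > 0" using pos ry y by auto
        have "ennreal (K^2 * dr x p0) = ennreal (K^2) * ennreal (dr x p0)" by (rule ennreal_mult) (use dr_nn in auto)
        hence "ennreal (K^2 * dr x p0) < ennreal (dr y p0)" using lt r dreal[OF ry oXf] by simp
        moreover have "0 \<le> K^2 * dr x p0" using dr_nn by simp
        ultimately have lt': "K^2 * dr x p0 < dr y p0" using ennreal_less_iff by blast
        have "K * dr x p0 \<le> K^2 * dr x p0" using K1 a by (intro mult_right_mono) (auto simp: power2_eq_square)
        hence lt2: "K * dr x p0 < dr y p0" using lt' by linarith
        have "dr y p0 \<le> K * max (dr y x) (dr x p0)" using dr_qt[OF ry oXf r(1)] .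
        hence "dr y p0 \<le> K * dr x y" using lt2 dr_sym[OF ry r(1)] by (auto simp: max_def split: if_splits)
        moreover have "K * dr x y \<le> K * (K * dr x y)" using K1 dr_nn[of x y] by (intro le_mult_K) auto
        ultimately have "dr y p0 \<le> K^2 * dr x y" by (simp add: power2_eq_square mult.assoc)
        hence "1 \<le> K^2 * dr x y / dr y p0" using b by simp
        moreover have "K^2 * dr x p0 * (dr x y / (dr x p0 * dr y p0)) = K^2 * dr x y / dr y p0"
          using a b by (simp add: field_simps)
        ultimately have "1 \<le> K^2 * dr x p0 * (dr x y / (dr x p0 * dr y p0))" by simp
        hence "ennreal 1 \<le> ennreal (K^2 * dr x p0 * (dr x y / (dr x p0 * dr y p0)))" by (rule ennreal_leI)
        also have "\<dots> = ennreal (K^2) * ennreal (dr x p0) * ennreal (dr x y / (dr x p0 * dr y p0))"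
          by (rule enn3[symmetric]) (use a b dr_nn in auto)
        also have "\<dots> = ennreal (K^2) * d x p0 * dinv x y"
          using I_reg[OF r(1) ry] x y xy r(2) by simp
        finally show ?thesis by simp
      qed
    qed
    show "\<forall>R>0. \<forall>x\<in>X - {p0}. \<forall>y\<in>X - {p0}. ennreal R \<le> d x p0 \<longrightarrow> ennreal R \<le> d y p0 \<longrightarrow> dinv x y \<le> ennreal (K^2 / R)"
    proof (intro allI impI ballI)
      fix R :: real and x y assume R: "R > 0" and x: "x \<in> X - {p0}" and y: "y \<in> X - {p0}"
        and Rx: "ennreal R \<le> d x p0" and Ry: "ennreal R \<le> d y p0"
      have KR: "1 / R \<le> K^2 / R" using K2 R by (simp add: divide_right_mono)
      have Rle: "R \<le> dr w p0" if "w \<in> Xf" "w \<noteq> p0" "ennreal R \<le> d w p0" for w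
        using that dreal[OF that(1) oXf] R dr_nn[of w p0] by simp
      have inv1: "1 / dr w p0 \<le> K^2 / R" if "w \<in> Xf" "w \<noteq> p0" "ennreal R \<le> d w p0" for w
      proof -
        have "1 / dr w p0 \<le> 1 / R" using Rle[OF that] R by (intro divide_left_mono) auto
        thus ?thesis using KR by linarith
      qed
      show "dinv x y \<le> ennreal (K^2 / R)"
      proof (cases "x = y")
        case True thus ?thesis using I_refl by simp
      next
        case xy: False
        consider "pinf = Some x" | "pinf = Some y" | "x \<in> Xf" "y \<in> Xf" using reg_cases x y by blast
        thus ?thesis
        proof cases
          case 1
          hence ry: "y \<in> Xf" using xy y by auto
          have e: "dinv x y = ennreal (1 / dr y p0)" using I_p[OF 1 ry] y by auto
          have "1 / dr y p0 \<le> K^2 / R" using inv1[OF ry _ Ry] y by auto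
          thus ?thesis unfolding e by (rule ennreal_leI)
        next
          case 2
          hence rx: "x \<in> Xf" using xy x by auto
          have e: "dinv x y = ennreal (1 / dr x p0)" using I_p[OF 2 rx] x by auto
          have "1 / dr x p0 \<le> K^2 / R" using inv1[OF rx _ Rx] x by auto
          thus ?thesis unfolding e by (rule ennreal_leI)
        next
          case 3
          have a: "R \<le> dr x p0" "R \<le> dr y p0" using Rle 3 x y Rx Ry by auto
          have u: "dr x y \<le> K * max (dr x p0) (dr y p0)" using dr_qt[OF 3(1,2) oXf] dr_sym[OF oXf 3(2)] by simp
          have "dr x y / (dr x p0 * dr y p0) \<le> K^2 * max (1 / dr x p0) (1 / dr y p0)"
            by (rule RQ4) (use pos 3 x y dr_pos[OF 3 xy] K1 u in auto)
          also have "\<dots> \<le> K^2 * (1/R)"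
          proof (rule mult_left_mono)
            have "1 / dr x p0 \<le> 1 / R" "1 / dr y p0 \<le> 1 / R" using a R by (intro divide_left_mono; auto)+
            thus "max (1 / dr x p0) (1 / dr y p0) \<le> 1 / R" by simp
          qed simp
          finally have "dr x y / (dr x p0 * dr y p0) \<le> K^2 / R" by simp
          moreover have "dinv x y = ennreal (dr x y / (dr x p0 * dr y p0))" using I_reg[OF 3] x y xy by auto
          ultimately show ?thesis by (simp add: ennreal_leI)
        qed
      qed
    qed
  qed
qed

end


context qsetup begin

lemma dir2: "good X dinv (X - {p0}) n \<Longrightarrow> good X d Xf n"
proof -
  assume gd: "good X dinv (X - {p0}) n"
  have pos: "dr w p0 > 0" if "w \<in> Xf" "w \<noteq> p0" for w using dr_pos[OF that(1) oXf that(2)] .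
  define g where "g x = (if x = p0 then top else ennreal (1 / dr x p0))" for x
  have gfin: "x \<noteq> p0" "g x = ennreal (1 / dr x p0)" if "g x < top" for x
    using that unfolding g_def by (auto split: if_splits)
  have Rg: "dr x p0 \<le> 1/R" if "x \<in> Xf" "R > 0" "ennreal R \<le> g x" for x R
  proof (cases "x = p0")
    case True thus ?thesis using that d0 oX dreal oXf by (metis dr_def enn2real_0 less_eq_real_def zero_less_divide_1_iff)
  next
    case False
    hence "R \<le> 1 / dr x p0" using that unfolding g_def by (simp add: ennreal_le_iff del: ennreal_le_iff) (metis ennreal_le_iff pos[OF that(1) False] less_imp_le zero_le_divide_1_iff)
    thus ?thesis using pos[OF that(1) False] that(2) by (simp add: field_simps)
  qed
  show ?thesis
  proof (rule main_lemma[OF K1, where \<sigma> = dinv and g = g and Y\<sigma> = "X - {p0}"])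
    show "\<forall>x\<in>X. \<forall>y\<in>X. \<forall>z\<in>X. d x y \<le> ennreal K * max (d x z) (d z y)" using dqt by blast
    show "\<forall>x\<in>X. \<forall>y\<in>X. d x y = d y x" using dsym by blast
    show "\<forall>x\<in>X. d x x = 0" using d0 by blast
    show "Xf \<subseteq> X" by blast
    show "\<forall>x\<in>Xf. 0 < g x" using pos unfolding g_def by auto
    show "\<forall>x\<in>Xf. g x < top \<longrightarrow> x \<in> X - {p0}" using gfin by blast
    show "good X dinv (X - {p0}) n" by (rule gd)
    show "\<forall>x\<in>Xf. \<forall>y\<in>Xf. g x < top \<longrightarrow> g y < top \<longrightarrow> dinv x y = d x y * (g x * g y)"
    proof (intro ballI impI)
      fix x y assume x: "x \<in> Xf" and y: "y \<in> Xf" and fx: "g x < top" and fy: "g y < top"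
      note gx = gfin[OF fx] and gy = gfin[OF fy]
      show "dinv x y = d x y * (g x * g y)"
      proof (cases "x = y")
        case True thus ?thesis using d0 x I_refl by auto
      next
        case False
        have a: "dr x p0 > 0" "dr y p0 > 0" using pos x y gx gy by auto
        have "d x y * (g x * g y) = ennreal (dr x y) * (ennreal (1 / dr x p0) * ennreal (1 / dr y p0))"
          using dreal x y gx gy by simp
        also have "\<dots> = ennreal (dr x y) * ennreal (1 / dr x p0) * ennreal (1 / dr y p0)"
          by (simp add: mult.assoc)
        also have "\<dots> = ennreal (dr x y * (1 / dr x p0) * (1 / dr y p0))"
          by (rule enn3) (use a dr_nn in auto)
        also have "dr x y * (1 / dr x p0) * (1 / dr y p0) = dr x y / (dr x p0 * dr y p0)" by simp
        finally show ?thesis using I_reg[OF x y gx(1) gy(1) False] by simp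
      qed
    qed
    show "\<forall>x\<in>Xf. \<forall>y\<in>Xf. g x < top \<longrightarrow> ennreal K * g x < g y \<longrightarrow> 1 \<le> ennreal K * g x * d x y"
    proof (intro ballI impI)
      fix x y assume x: "x \<in> Xf" and y: "y \<in> Xf" and fx: "g x < top" and lt: "ennreal K * g x < g y"
      note gx = gfin[OF fx]
      have a: "dr x p0 > 0" using pos x gx by auto
      have e: "ennreal K * g x * d x y = ennreal (K * (1 / dr x p0) * dr x y)"
        using gx dreal[OF x y] enn3[of K "1 / dr x p0" "dr x y"] K1 a dr_nn by simp
      show "1 \<le> ennreal K * g x * d x y"
      proof (cases "y = p0")
        case True
        have "K * (1 / dr x p0) * dr x y = K" using True a by simp
        thus ?thesis using e K1 by simp
      next
        case False
        have b: "dr y p0 > 0" using pos y False by auto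
        have gy: "g y = ennreal (1 / dr y p0)" using False unfolding g_def by simp
        have "ennreal (K * (1 / dr x p0)) = ennreal K * ennreal (1 / dr x p0)"
          by (rule ennreal_mult) (use K1 a in auto)
        hence "ennreal (K * (1 / dr x p0)) < ennreal (1 / dr y p0)"
          using lt gx gy by simp
        hence "K * (1 / dr x p0) < 1 / dr y p0" using K1 a by (subst (asm) ennreal_less_iff) auto
        hence lt2: "K * dr y p0 < dr x p0" using a b by (simp add: field_simps)
        have "dr x p0 \<le> K * max (dr x y) (dr y p0)" using dr_qt[OF x oXf y] dr_sym[OF oXf y] by simp
        hence "dr x p0 \<le> K * dr x y" using lt2 by (auto simp: max_def split: if_splits)
        hence "1 \<le> K * (1 / dr x p0) * dr x y" using a by (simp add: field_simps)
        thus ?thesis using e by (simp add: ennreal_leI)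
      qed
    qed
    show "\<forall>R>0. \<forall>x\<in>Xf. \<forall>y\<in>Xf. ennreal R \<le> g x \<longrightarrow> ennreal R \<le> g y \<longrightarrow> d x y \<le> ennreal (K / R)"
    proof (intro allI impI ballI)
      fix R :: real and x y assume R: "R > 0" and x: "x \<in> Xf" and y: "y \<in> Xf"
        and Rx: "ennreal R \<le> g x" and Ry: "ennreal R \<le> g y"
      have "dr x y \<le> K * max (dr x p0) (dr p0 y)" using dr_qt[OF x y oXf] .
      also have "\<dots> \<le> K * (1/R)"
        using Rg[OF x R Rx] Rg[OF y R Ry] dr_sym[OF oXf y] K1 by (intro mult_left_mono) auto
      finally have "dr x y \<le> K / R" by simp
      thus "d x y \<le> ennreal (K / R)" using dreal[OF x y] by (simp add: ennreal_leI)
    qed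
  qed
qed

end


theorem proposition3p2:
  fixes X :: "'a set" and K :: real and d :: "'a \<Rightarrow> 'a \<Rightarrow> ennreal"
    and pinf :: "'a option" and p0 :: 'a
  assumes "quasi_metric X K d pinf"
    and "p0 \<in> X" and "Some p0 \<noteq> pinf"
  shows "nagata_dim X d pinf = nagata_dim X (involution d pinf p0) (Some p0)"
proof -
  interpret qsetup X K d pinf p0 using assms by unfold_locales
  have nd: "nagata_dim X \<rho> q = Inf {enat n | n. good X \<rho> (X - set_option q) n}" for \<rho> q
    unfolding nagata_dim_def good_def by (rule refl)
  have iff: "good X d (X - set_option pinf) n \<longleftrightarrow> good X (involution d pinf p0) (X - {p0}) n" for n
    by (rule iffI[OF dir1 dir2])
  have n2: "nagata_dim X (involution d pinf p0) (Some p0) = Inf {enat n | n. good X (involution d pinf p0) (X - {p0}) n}"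
    using nd[of "involution d pinf p0" "Some p0"] by simp
  show ?thesis unfolding n2 nd[of d pinf] by (simp only: iff)
qed
end
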